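(* Let $\mathcal{D}=(D,B,\mu)$ be a blueprint. For any $\varepsilon>0$, $$\mathsf{Soundness}(\mathcal{D})\le\mathsf{Soundness}_\varepsilon(\mathcal{D})\le\mathsf{Soundness}(\mathcal{D})+|B|\varepsilon.$$
   Context: $\Phi$ is the standard normal CDF. For $\rho\in[-1,1]$, $\Gamma_\rho(q_1,q_2)=\Pr[x\le\Phi^{-1}(q_1),\,y\le\Phi^{-1}(q_2)]$ for jointly Gaussian standard normals $x,y$ with correlation $\rho$. A configuration is $\theta=(b_i,b_j,b_{ij})\in[-1,1]^3$ with $-1+|b_i+b_j|\le b_{ij}\le1-|b_i-b_j|$. Its relative pairwise bias is $\rho(\theta)=\frac{b_{ij}-b_ib_j}{\sqrt{(1-b_i^2)(1-b_j^2)}}$ (or $0$ if the denominator is $0$). A blueprint $\mathcal{D}=(D,B,\mu)$: $D$ a finitely supported distribution on configurations, $B$ the set of biases (first two coordinates) appearing in its support, $\mu$ a probability measure on $B$ with $\sum_b\mu(b)b=0$. A threshold function $t:B\to[-1,1]$ is balanced for $\mathcal{D}$ if $\sum_{b\in B}\mu(b)t(b)=0$ and $\varepsilon$-almost balanced if $|\sum_{b\in B}\mu(b)t(b)|\le\varepsilon$. $\mathsf{Soundness}(\mathcal{D},t)=\mathbb{E}_{\theta=(b_i,b_j,b_{ij})\sim D}[\frac{1-t(b_i)}{2}+\frac{1-t(b_j)}{2}-2\Gamma_{\rho(\theta)}(\frac{1-t(b_i)}{2},\frac{1-t(b_j)}{2})]$; $\mathsf{Soundness}(\mathcal{D})$ is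 its maximum over balanced $t$ and $\mathsf{Soundness}_\varepsilon(\mathcal{D})$ its maximum over $\varepsilon$-almost balanced $t$. *)

theory Defs
  imports "HOL-Probability.Probability"
begin

definition gauss :: "real measure" where
  "gauss = density lborel (\<lambda>x. ennreal (std_normal_density x))"

definition Phi :: "real \<Rightarrow> real" where
  "Phi x = measure gauss {..x}"

text \<open>Gamma_rho(q1,q2) = Pr[x <= Phi^-1(q1), y <= Phi^-1(q2)] for standard normals x, y
  with correlation rho.  We realise y = rho x + sqrt(1 - rho^2) z with x, z independent
  standard normals, and use that (for q in [0,1]) x <= Phi^-1(q) iff Phi x <= q
  (with Phi^-1(0) = -infinity and Phi^-1(1) = +infinity).\<close>
definition Gamma :: "real \<Rightarrow> real \<Rightarrow> real \<Rightarrow> real" where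
  "Gamma \<rho> q1 q2 = measure (gauss \<Otimes>\<^sub>M gauss)
     {(x, z). Phi x \<le> q1 \<and> Phi (\<rho> * x + sqrt (1 - \<rho>\<^sup>2) * z) \<le> q2}"

type_synonym config = "real \<times> real \<times> real"

definition valid_config :: "config \<Rightarrow> bool" where
  "valid_config \<theta> = (case \<theta> of (b_i, b_j, b_ij) \<Rightarrow>
     b_i \<in> {-1..1} \<and> b_j \<in> {-1..1} \<and> b_ij \<in> {-1..1} \<and>
     -1 + \<bar>b_i + b_j\<bar> \<le> b_ij \<and> b_ij \<le> 1 - \<bar>b_i - b_j\<bar>)"

definition rel_bias :: "config \<Rightarrow> real" where
  "rel_bias \<theta> = (case \<theta> of (b_i, b_j, b_ij) \<Rightarrow>
     (let d = sqrt ((1 - b_i\<^sup>2) * (1 - b_j\<^sup>2)) in if d = 0 then 0 else (b_ij - b_i * b_j) / d))"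

definition biases :: "config pmf \<Rightarrow> real set" where
  "biases D = (\<Union>(b_i, b_j, b_ij) \<in> set_pmf D. {b_i, b_j})"

definition blueprint :: "config pmf \<Rightarrow> (real \<Rightarrow> real) \<Rightarrow> bool" where
  "blueprint D \<mu> \<longleftrightarrow> finite (set_pmf D) \<and> (\<forall>\<theta>\<in>set_pmf D. valid_config \<theta>) \<and>
     (\<forall>b\<in>biases D. \<mu> b \<ge> 0) \<and> (\<Sum>b\<in>biases D. \<mu> b) = 1 \<and>
     (\<Sum>b\<in>biases D. \<mu> b * b) = 0"

definition threshold :: "config pmf \<Rightarrow> (real \<Rightarrow> real) \<Rightarrow> bool" where
  "threshold D t \<longleftrightarrow> (\<forall>b\<in>biases D. t b \<in> {-1..1})"

definition almost_balanced :: "real \<Rightarrow> config pmf \<Rightarrow> (real \<Rightarrow> real) \<Rightarrow> (real \<Rightarrow> real) \<Rightarrow> bool" where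
  "almost_balanced \<epsilon> D \<mu> t \<longleftrightarrow> threshold D t \<and> \<bar>\<Sum>b\<in>biases D. \<mu> b * t b\<bar> \<le> \<epsilon>"

definition balanced :: "config pmf \<Rightarrow> (real \<Rightarrow> real) \<Rightarrow> (real \<Rightarrow> real) \<Rightarrow> bool" where
  "balanced D \<mu> t \<longleftrightarrow> threshold D t \<and> (\<Sum>b\<in>biases D. \<mu> b * t b) = 0"

definition soundness_t :: "config pmf \<Rightarrow> (real \<Rightarrow> real) \<Rightarrow> real" where
  "soundness_t D t = measure_pmf.expectation D (\<lambda>\<theta>. case \<theta> of (b_i, b_j, b_ij) \<Rightarrow>
     (1 - t b_i) / 2 + (1 - t b_j) / 2 - 2 * Gamma (rel_bias \<theta>) ((1 - t b_i) / 2) ((1 - t b_j) / 2))"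

definition soundness :: "config pmf \<Rightarrow> (real \<Rightarrow> real) \<Rightarrow> real" where
  "soundness D \<mu> = (SUP t \<in> {t. balanced D \<mu> t}. soundness_t D t)"

definition soundness_eps :: "real \<Rightarrow> config pmf \<Rightarrow> (real \<Rightarrow> real) \<Rightarrow> real" where
  "soundness_eps \<epsilon> D \<mu> = (SUP t \<in> {t. almost_balanced \<epsilon> D \<mu> t}. soundness_t D t)"

end

theory Submission
  imports Defs
begin


lemma gauss_real_dist: "real_distribution gauss"
  unfolding gauss_def by (rule real_dist_normal_dist)

lemma sets_gauss[simp, measurable_cong]: "sets gauss = sets borel"
  by (simp add: gauss_def)

lemma space_gauss[simp]: "space gauss = UNIV"
  by (simp add: gauss_def)

lemma prob_gauss: "prob_space gauss"
  using gauss_real_dist real_distribution_def by blast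

lemma Phi_cdf: "Phi = cdf gauss"
  by (simp add: Phi_def cdf_def fun_eq_iff)

lemma gauss_atom: "measure gauss {x} = 0"
proof -
  have "emeasure gauss {x} = 0"
    unfolding gauss_def
    by (subst emeasure_density) (auto intro!: nn_integral_null_set)
  then show ?thesis by (simp add: measure_def)
qed

lemma Phi_cont: "isCont Phi x"
  using finite_borel_measure.isCont_cdf[OF real_distribution.finite_borel_measure_M[OF gauss_real_dist]] gauss_atom Phi_cdf by simp

lemma Phi_mono: "x \<le> y \<Longrightarrow> Phi x \<le> Phi y"
  using finite_borel_measure.cdf_nondecreasing[OF real_distribution.finite_borel_measure_M[OF gauss_real_dist]] Phi_cdf by simp

lemma Phi_le1: "Phi x \<le> 1"
  using real_distribution.cdf_bounded_prob[OF gauss_real_dist] Phi_cdf by simp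

lemma Phi_nonneg: "0 \<le> Phi x"
  by (simp add: Phi_def)

lemma Phi_bot: "(Phi \<longlongrightarrow> 0) at_bot"
  using finite_borel_measure.cdf_lim_at_bot[OF real_distribution.finite_borel_measure_M[OF gauss_real_dist]] Phi_cdf by simp

lemma Phi_top: "(Phi \<longlongrightarrow> 1) at_top"
  using real_distribution.cdf_lim_at_top_prob[OF gauss_real_dist] Phi_cdf by simp

lemma Phi_meas[measurable]: "Phi \<in> borel_measurable borel"
  by (rule borel_measurable_mono) (simp add: mono_def Phi_mono)

lemma Phi_level_open:
  assumes "0 < q" "q < 1"
  shows "measure gauss {x. Phi x \<le> q} = q"
proof -
  let ?A = "{x. Phi x \<le> q}"
  from order_tendstoD(2)[OF Phi_bot assms(1)] obtain a where a: "\<And>x. x \<le> a \<Longrightarrow> Phi x < q"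
    by (auto simp: eventually_at_bot_linorder)
  from order_tendstoD(1)[OF Phi_top assms(2)] obtain b where b: "\<And>x. x \<ge> b \<Longrightarrow> Phi x > q"
    by (auto simp: eventually_at_top_linorder)
  have ne: "?A \<noteq> {}" using a[of a] by (auto intro: less_imp_le)
  have bdd: "bdd_above ?A"
    unfolding bdd_above_def
    by (metis b linorder_not_le mem_Collect_eq nle_le)
  have cl: "closed ?A"
    by (rule closed_Collect_le) (auto intro: continuous_at_imp_continuous_on Phi_cont)
  define c where "c = Sup ?A"
  have cA: "c \<in> ?A" unfolding c_def using closed_contains_Sup[OF ne bdd cl] .
  have Aeq: "?A = {..c}"
  proof
    show "?A \<subseteq> {..c}" unfolding c_def using bdd by (auto intro: cSup_upper)
    show "{..c} \<subseteq> ?A" using cA by (auto dest: Phi_mono)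
  qed
  have ab: "a \<le> b" using a[of a] b[of a] by (metis less_asym nle_le)
  have "\<exists>d. a \<le> d \<and> d \<le> b \<and> Phi d = q"
    using a[of a] b[of b] ab
    by (intro IVT) (auto intro: Phi_cont less_imp_le)
  then obtain d where "Phi d = q" by blast
  then have "d \<le> c" using Aeq by auto
  then have "q \<le> Phi c" using \<open>Phi d = q\<close> Phi_mono by metis
  with cA have "Phi c = q" by simp
  then show ?thesis using Aeq by (simp add: Phi_def)
qed

lemma Phi_set_meas[measurable]: "{x. Phi x \<le> q} \<in> sets gauss"
  by simp

lemma Phi_level:
  assumes "0 \<le> q" "q \<le> 1"
  shows "measure gauss {x. Phi x \<le> q} = q"
proof -
  interpret G: prob_space gauss by (rule prob_gauss)
  consider "q = 0" | "q = 1" | "0 < q \<and> q < 1" using assms by linarith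
  then show ?thesis
  proof cases
    case 1
    define m where "m = measure gauss {x. Phi x \<le> 0}"
    have E: "m \<le> e" if "0 < e" "e < 1" for e
    proof -
      have "{x. Phi x \<le> 0} \<subseteq> {x. Phi x \<le> e}" using that by auto
      then have "m \<le> measure gauss {x. Phi x \<le> e}"
        unfolding m_def by (intro G.finite_measure_mono) (auto intro: Phi_set_meas)
      then show "m \<le> e" using Phi_level_open[OF that] by simp
    qed
    have "m \<le> 0"
    proof (rule ccontr)
      assume "\<not> m \<le> 0"
      then have "0 < min (m/2) (1/2)" "min (m/2) (1/2) < 1" by auto
      from E[OF this] have "m \<le> min (m/2) (1/2)" .
      then have "m \<le> m/2" by linarith
      with \<open>\<not> m \<le> 0\<close> show False by simp
    qed
    then show ?thesis using 1 m_def by (simp add: measure_nonneg antisym)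
  next
    case 2
    then have "{x. Phi x \<le> q} = UNIV" using Phi_le1 by auto
    then show ?thesis using 2 G.prob_space by simp
  next
    case 3 then show ?thesis using Phi_level_open by auto
  qed
qed

lemma Phi_between:
  assumes "0 \<le> q" "q \<le> q'" "q' \<le> 1"
  shows "measure gauss {x. q < Phi x \<and> Phi x \<le> q'} \<le> q' - q"
proof -
  interpret G: prob_space gauss by (rule prob_gauss)
  have eq: "{x. q < Phi x \<and> Phi x \<le> q'} = {x. Phi x \<le> q'} - {x. Phi x \<le> q}" by auto
  have sub: "{x. Phi x \<le> q} \<subseteq> {x. Phi x \<le> q'}" using assms by auto
  have "measure gauss ({x. Phi x \<le> q'} - {x. Phi x \<le> q}) = measure gauss {x. Phi x \<le> q'} - measure gauss {x. Phi x \<le> q}"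
    by (rule G.finite_measure_Diff[OF Phi_set_meas Phi_set_meas sub])
  then show ?thesis using Phi_level assms eq by simp
qed



abbreviation "GG \<equiv> gauss \<Otimes>\<^sub>M gauss"

lemma pp_gauss: "pair_prob_space gauss gauss"
  by (simp add: pair_prob_space.intro pair_sigma_finite_def prob_gauss prob_space_imp_sigma_finite)

lemma prob_GG: "prob_space GG"
proof -
  interpret G: pair_prob_space gauss gauss by (rule pp_gauss)
  show ?thesis by (rule G.P.prob_space_axioms)
qed

lemma distr_GG_fst: "distr GG borel fst = gauss"
proof -
  interpret G: prob_space gauss by (rule prob_gauss)
  have "distr GG gauss fst = gauss" by (rule G.distr_pair_fst)
  moreover have "distr GG borel fst = distr GG gauss fst" by (rule distr_cong) auto
  ultimately show ?thesis by simp
qed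

lemma distr_GG_snd: "distr GG borel snd = gauss"
proof -
  interpret G: pair_prob_space gauss gauss by (rule pp_gauss)
  show ?thesis
  proof (intro measure_eqI)
    fix A assume A: "A \<in> sets (distr GG borel snd)"
    then have "emeasure (distr GG borel snd) A = emeasure GG (UNIV \<times> A)"
      by (auto simp add: emeasure_distr space_pair_measure intro!: arg_cong2[where f=emeasure])
    moreover have "emeasure GG (UNIV \<times> A) = emeasure gauss UNIV * emeasure gauss A"
      using A by (intro sigma_finite_measure.emeasure_pair_measure_Times[OF prob_space_imp_sigma_finite[OF prob_gauss]]) auto
    moreover have "emeasure gauss UNIV = 1" using G.M1.emeasure_space_1 by simp
    ultimately show "emeasure (distr GG borel snd) A = emeasure gauss A"
      by simp
  qed simp
qed

lemma indep_GG: "prob_space.indep_var GG borel fst borel snd"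
proof -
  interpret P: prob_space GG by (rule prob_GG)
  have "distr GG (borel \<Otimes>\<^sub>M borel) (\<lambda>x. (fst x, snd x)) = GG"
    by (simp add: distr_id2)
  then show ?thesis
    unfolding P.indep_var_distribution_eq
    by (simp add: distr_GG_fst distr_GG_snd)
qed

lemma distributed_fst: "distributed GG lborel fst std_normal_density"
  unfolding distributed_def
  using distr_GG_fst
  by (auto simp: gauss_def cong: distr_cong)

lemma distributed_snd: "distributed GG lborel snd std_normal_density"
  unfolding distributed_def
  using distr_GG_snd
  by (auto simp: gauss_def cong: distr_cong)

lemma distr_comb:
  assumes r: "\<rho>\<^sup>2 \<le> 1"
  shows "distributed GG lborel (\<lambda>p. \<rho> * fst p + sqrt (1 - \<rho>\<^sup>2) * snd p) std_normal_density"
proof -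
  interpret P: prob_space GG by (rule prob_GG)
  consider "\<rho> = 0" | "\<rho> = 1" | "\<rho> = -1" | "\<rho> \<noteq> 0 \<and> \<rho>\<^sup>2 < 1"
  proof -
    assume a: "\<rho> = 0 \<Longrightarrow> thesis" "\<rho> = 1 \<Longrightarrow> thesis" "\<rho> = -1 \<Longrightarrow> thesis" "\<rho> \<noteq> 0 \<and> \<rho>\<^sup>2 < 1 \<Longrightarrow> thesis"
    have "\<rho>\<^sup>2 = 1 \<longleftrightarrow> \<rho> = 1 \<or> \<rho> = -1" by (rule power2_eq_1_iff)
    then show thesis using a r by (cases "\<rho> = 0"; cases "\<rho>\<^sup>2 = 1") auto
  qed
  then show ?thesis
  proof cases
    case 1 then show ?thesis using distributed_snd by simp
  next
    case 2 then show ?thesis using distributed_fst by simp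
  next
    case 3
    have "distributed GG lborel (\<lambda>x. 0 + (-1) * fst x) (normal_density (0 + (-1) * 0) (\<bar>-1\<bar> * 1))"
      by (rule P.normal_density_affine[OF distributed_fst]) auto
    then show ?thesis using 3 by simp
  next
    case 4
    define s where "s = sqrt (1 - \<rho>\<^sup>2)"
    have s: "0 < s" using 4 by (simp add: s_def)
    have s2: "s\<^sup>2 = 1 - \<rho>\<^sup>2" using 4 by (simp add: s_def)
    have d1: "distributed GG lborel (\<lambda>x. 0 + \<rho> * fst x) (normal_density (0 + \<rho> * 0) (\<bar>\<rho>\<bar> * 1))"
      by (rule P.normal_density_affine[OF distributed_fst]) (use 4 in auto)
    have d2: "distributed GG lborel (\<lambda>x. 0 + s * snd x) (normal_density (0 + s * 0) (\<bar>s\<bar> * 1))"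
      by (rule P.normal_density_affine[OF distributed_snd]) (use s in auto)
    have ind: "P.indep_var borel (\<lambda>x. 0 + \<rho> * fst x) borel (\<lambda>x. 0 + s * snd x)"
      using P.indep_var_compose[unfolded comp_def, OF indep_GG, of "\<lambda>x. 0 + \<rho> * x" borel "\<lambda>x. 0 + s * x" borel]
      by simp
    have "distributed GG lborel (\<lambda>x. (0 + \<rho> * fst x) + (0 + s * snd x))
        (normal_density (0 + \<rho> * 0 + (0 + s * 0)) (sqrt ((\<bar>\<rho>\<bar> * 1)\<^sup>2 + (\<bar>s\<bar> * 1)\<^sup>2)))"
      by (rule P.add_indep_normal[OF ind _ _ d1 d2]) (use 4 s in auto)
    moreover have "(\<bar>\<rho>\<bar> * 1)\<^sup>2 + (\<bar>s\<bar> * 1)\<^sup>2 = 1" using s2 by simp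
    ultimately show ?thesis by (simp add: s_def)
  qed
qed

lemma comb_between:
  assumes r: "\<rho>\<^sup>2 \<le> 1" and q: "0 \<le> q" "q \<le> q'" "q' \<le> 1"
  shows "measure GG {p. q < Phi (\<rho> * fst p + sqrt (1 - \<rho>\<^sup>2) * snd p) \<and> Phi (\<rho> * fst p + sqrt (1 - \<rho>\<^sup>2) * snd p) \<le> q'} \<le> q' - q"
proof -
  let ?Y = "\<lambda>p. \<rho> * fst p + sqrt (1 - \<rho>\<^sup>2) * snd p"
  let ?S = "{x. q < Phi x \<and> Phi x \<le> q'}"
  have d: "distr GG lborel ?Y = gauss" and m: "?Y \<in> measurable GG lborel"
    using distr_comb[OF r] unfolding distributed_def gauss_def by auto
  have S: "?S \<in> sets lborel" by measurable
  have "measure gauss ?S = measure GG (?Y -` ?S \<inter> space GG)"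
    using measure_distr[OF m S] d by simp
  moreover have "?Y -` ?S \<inter> space GG = {p. q < Phi (?Y p) \<and> Phi (?Y p) \<le> q'}"
    by (auto simp: space_pair_measure)
  ultimately show ?thesis using Phi_between[OF q] by simp
qed



lemma Coll_GG: "{p. P p} = {p \<in> space GG. P p}"
  by (simp add: space_pair_measure)

lemma Gamma_set_meas[measurable]:
  "{(x, z). Phi x \<le> q1 \<and> Phi (\<rho> * x + sqrt (1 - \<rho>\<^sup>2) * z) \<le> q2} \<in> sets GG"
proof -
  have "{(x, z). Phi x \<le> q1 \<and> Phi (\<rho> * x + sqrt (1 - \<rho>\<^sup>2) * z) \<le> q2} =
    {p \<in> space GG. Phi (fst p) \<le> q1 \<and> Phi (\<rho> * fst p + sqrt (1 - \<rho>\<^sup>2) * snd p) \<le> q2}"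
    by (auto simp: space_pair_measure)
  also have "\<dots> \<in> sets GG" by measurable
  finally show ?thesis .
qed

lemma Gamma_nonneg: "0 \<le> Gamma \<rho> q1 q2"
  by (simp add: Gamma_def)

lemma Gamma_mono:
  assumes "q1 \<le> q1'" "q2 \<le> q2'"
  shows "Gamma \<rho> q1 q2 \<le> Gamma \<rho> q1' q2'"
proof -
  interpret P: prob_space GG by (rule prob_GG)
  show ?thesis unfolding Gamma_def
    by (intro P.finite_measure_mono Gamma_set_meas) (use assms in auto)
qed

lemma Gamma_lip:
  assumes r: "\<rho>\<^sup>2 \<le> 1" and q: "0 \<le> q1" "q1 \<le> q1'" "q1' \<le> 1" "0 \<le> q2" "q2 \<le> q2'" "q2' \<le> 1"
  shows "Gamma \<rho> q1' q2' \<le> Gamma \<rho> q1 q2 + (q1' - q1) + (q2' - q2)"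
proof -
  interpret P: prob_space GG by (rule prob_GG)
  let ?Y = "\<lambda>p. \<rho> * fst p + sqrt (1 - \<rho>\<^sup>2) * snd p"
  let ?A = "\<lambda>a b. {(x, z). Phi x \<le> a \<and> Phi (\<rho> * x + sqrt (1 - \<rho>\<^sup>2) * z) \<le> b}"
  let ?B1 = "{p. q1 < Phi (1 * fst p + sqrt (1 - 1\<^sup>2) * snd p) \<and> Phi (1 * fst p + sqrt (1 - 1\<^sup>2) * snd p) \<le> q1'}"
  let ?B2 = "{p. q2 < Phi (?Y p) \<and> Phi (?Y p) \<le> q2'}"
  have b1: "measure GG ?B1 \<le> q1' - q1" by (rule comb_between) (use q in auto)
  have b2: "measure GG ?B2 \<le> q2' - q2" by (rule comb_between) (use q r in auto)
  have m1: "?B1 \<in> sets GG" by (subst Coll_GG) measurable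
  have m2: "?B2 \<in> sets GG" by (subst Coll_GG) measurable
  have sub: "?A q1' q2' \<subseteq> (?A q1 q2 \<union> ?B1) \<union> ?B2" by auto
  have "measure GG (?A q1' q2') \<le> measure GG ((?A q1 q2 \<union> ?B1) \<union> ?B2)"
    by (rule P.finite_measure_mono[OF sub]) (use m1 m2 Gamma_set_meas in auto)
  also have "\<dots> \<le> measure GG (?A q1 q2 \<union> ?B1) + measure GG ?B2"
    by (rule measure_subadditive) (use m1 m2 Gamma_set_meas in \<open>auto simp: P.emeasure_finite\<close>)
  also have "\<dots> \<le> measure GG (?A q1 q2) + measure GG ?B1 + measure GG ?B2"
    using measure_subadditive[of "?A q1 q2" GG ?B1] m1 Gamma_set_meas by (auto simp: P.emeasure_finite)
  finally show ?thesis unfolding Gamma_def using b1 b2 by linarith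
qed

lemma F_step:
  assumes r: "\<rho>\<^sup>2 \<le> 1" and q: "0 \<le> q1" "q1 \<le> 1" "0 \<le> q2" "q2 \<le> 1" "0 \<le> q1'" "q1' \<le> 1" "0 \<le> q2'" "q2' \<le> 1"
    and dir: "(q1 \<le> q1' \<and> q2 \<le> q2') \<or> (q1' \<le> q1 \<and> q2' \<le> q2)"
  shows "q1 + q2 - 2 * Gamma \<rho> q1 q2 \<le> q1' + q2' - 2 * Gamma \<rho> q1' q2' + \<bar>q1 - q1'\<bar> + \<bar>q2 - q2'\<bar>"
  using dir
proof
  assume a: "q1 \<le> q1' \<and> q2 \<le> q2'"
  have "Gamma \<rho> q1' q2' \<le> Gamma \<rho> q1 q2 + (q1' - q1) + (q2' - q2)"
    by (rule Gamma_lip) (use a q r in auto)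
  then show ?thesis using a by linarith
next
  assume a: "q1' \<le> q1 \<and> q2' \<le> q2"
  have "Gamma \<rho> q1' q2' \<le> Gamma \<rho> q1 q2" by (rule Gamma_mono) (use a in auto)
  then show ?thesis using a by linarith
qed

lemma rel_bias_bound:
  assumes "valid_config \<theta>"
  shows "(rel_bias \<theta>)\<^sup>2 \<le> 1"
proof -
  obtain bi bj bij where th: "\<theta> = (bi, bj, bij)" by (cases \<theta>) auto
  have v: "-1 \<le> bi" "bi \<le> 1" "-1 \<le> bj" "bj \<le> 1" "-1 + \<bar>bi + bj\<bar> \<le> bij" "bij \<le> 1 - \<bar>bi - bj\<bar>"
    using assms th by (auto simp: valid_config_def)
  define P where "P = (1 - bi\<^sup>2) * (1 - bj\<^sup>2)"
  define e where "e = bij - bi * bj"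
  define L where "L = -1 + \<bar>bi + bj\<bar> - bi * bj"
  define U where "U = 1 - \<bar>bi - bj\<bar> - bi * bj"
  have LeU: "L \<le> e" "e \<le> U" using v by (auto simp: L_def U_def e_def)
  have "0 \<le> (1 - bi) * (1 + bi)" "0 \<le> (1 - bj) * (1 + bj)" using v by (intro mult_nonneg_nonneg; simp)+
  then have P0: "0 \<le> P" unfolding P_def
    by (intro mult_nonneg_nonneg) (auto simp: power2_eq_square algebra_simps)
  have U2: "U\<^sup>2 \<le> P"
  proof (cases "bj \<le> bi")
    case True
    then have "U = (1 - bi) * (1 + bj)" by (simp add: U_def algebra_simps)
    moreover have "P - ((1 - bi) * (1 + bj))\<^sup>2 = (1 - bi) * (1 + bj) * (2 * (bi - bj))"
      by (simp add: P_def power2_eq_square algebra_simps)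
    moreover have "0 \<le> (1 - bi) * (1 + bj) * (2 * (bi - bj))" using True v by simp
    ultimately show ?thesis by simp
  next
    case False
    then have "U = (1 - bj) * (1 + bi)" by (simp add: U_def algebra_simps)
    moreover have "P - ((1 - bj) * (1 + bi))\<^sup>2 = (1 - bj) * (1 + bi) * (2 * (bj - bi))"
      by (simp add: P_def power2_eq_square algebra_simps)
    moreover have "0 \<le> (1 - bj) * (1 + bi) * (2 * (bj - bi))" using False v by simp
    ultimately show ?thesis by simp
  qed
  have L2: "L\<^sup>2 \<le> P"
  proof (cases "0 \<le> bi + bj")
    case True
    then have "L = - ((1 - bi) * (1 - bj))" by (simp add: L_def algebra_simps)
    moreover have "P - ((1 - bi) * (1 - bj))\<^sup>2 = (1 - bi) * (1 - bj) * (2 * (bi + bj))"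
      by (simp add: P_def power2_eq_square algebra_simps)
    moreover have "0 \<le> (1 - bi) * (1 - bj) * (2 * (bi + bj))" using True v by simp
    ultimately show ?thesis by simp
  next
    case False
    then have "L = - ((1 + bi) * (1 + bj))" by (simp add: L_def algebra_simps)
    moreover have "P - ((1 + bi) * (1 + bj))\<^sup>2 = (1 + bi) * (1 + bj) * (- 2 * (bi + bj))"
      by (simp add: P_def power2_eq_square algebra_simps)
    moreover have "0 \<le> (1 + bi) * (1 + bj) * (- 2 * (bi + bj))" using False v
      by (rule_tac mult_nonneg_nonneg) auto
    ultimately show ?thesis by simp
  qed
  have e2: "e\<^sup>2 \<le> P"
  proof (cases "0 \<le> e")
    case True
    then have "e\<^sup>2 \<le> U\<^sup>2" using LeU by (intro power_mono) auto
    then show ?thesis using U2 by linarith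
  next
    case False
    then have "(-e)\<^sup>2 \<le> (-L)\<^sup>2" using LeU by (intro power_mono) auto
    then show ?thesis using L2 by simp
  qed
  show ?thesis
  proof (cases "sqrt P = 0")
    case True
    then show ?thesis by (simp add: rel_bias_def th P_def)
  next
    case False
    then have sp: "0 < sqrt P" using P0 by simp
    have "(e / sqrt P)\<^sup>2 = e\<^sup>2 / P" using P0 by (simp add: power_divide)
    also have "\<dots> \<le> 1" using e2 sp P0 by (simp add: divide_le_eq_1)
    finally show ?thesis using False by (simp add: rel_bias_def th P_def e_def Let_def)
  qed
qed



definition gfun :: "(real \<Rightarrow> real) \<Rightarrow> config \<Rightarrow> real" where
  "gfun t \<theta> = (case \<theta> of (b_i, b_j, b_ij) \<Rightarrow>
     (1 - t b_i) / 2 + (1 - t b_j) / 2 - 2 * Gamma (rel_bias \<theta>) ((1 - t b_i) / 2) ((1 - t b_j) / 2))"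

lemma soundness_t_gfun: "soundness_t D t = measure_pmf.expectation D (gfun t)"
  unfolding soundness_t_def gfun_def by simp

lemma biases_mem:
  assumes "(bi, bj, bk) \<in> set_pmf D"
  shows "bi \<in> biases D" "bj \<in> biases D"
  using assms unfolding biases_def by force+

lemma gfun_le2:
  assumes "threshold D t" "\<theta> \<in> set_pmf D"
  shows "gfun t \<theta> \<le> 2"
proof -
  obtain bi bj bk where th: "\<theta> = (bi, bj, bk)" by (cases \<theta>) auto
  have "t bi \<in> {-1..1}" "t bj \<in> {-1..1}"
    using assms biases_mem[of bi bj bk D] th unfolding threshold_def by auto
  moreover have "0 \<le> Gamma (rel_bias (bi, bj, bk)) ((1 - t bi) / 2) ((1 - t bj) / 2)" by (rule Gamma_nonneg)
  moreover have "gfun t (bi, bj, bk) = (1 - t bi) / 2 + (1 - t bj) / 2 - 2 * Gamma (rel_bias (bi, bj, bk)) ((1 - t bi) / 2) ((1 - t bj) / 2)"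
    by (simp add: gfun_def)
  ultimately show ?thesis unfolding th by (simp add: field_simps)
qed

lemma soundness_le2:
  assumes "blueprint D \<mu>" "threshold D t"
  shows "soundness_t D t \<le> 2"
proof -
  have fin: "finite (set_pmf D)" using assms unfolding blueprint_def by auto
  have "measure_pmf.expectation D (gfun t) \<le> measure_pmf.expectation D (\<lambda>_. 2)"
    by (intro integral_mono_AE integrable_measure_pmf_finite[OF fin])
       (auto simp: AE_measure_pmf_iff intro: gfun_le2[OF assms(2)])
  then show ?thesis by (simp add: soundness_t_gfun)
qed

lemma soundness_cmp:
  assumes bp: "blueprint D \<mu>" and th: "threshold D t" "threshold D t'"
    and dir: "(\<forall>b\<in>biases D. t' b \<le> t b) \<or> (\<forall>b\<in>biases D. t b \<le> t' b)"
    and K: "\<forall>b\<in>biases D. \<bar>t b - t' b\<bar> \<le> K"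
  shows "soundness_t D t \<le> soundness_t D t' + K"
proof -
  have fin: "finite (set_pmf D)" using bp unfolding blueprint_def by auto
  have pt: "gfun t \<theta> \<le> gfun t' \<theta> + K" if "\<theta> \<in> set_pmf D" for \<theta>
  proof -
    obtain bi bj bk where thet: "\<theta> = (bi, bj, bk)" by (cases \<theta>) auto
    have B: "bi \<in> biases D" "bj \<in> biases D" using biases_mem[of bi bj bk D] that thet by auto
    have r: "(rel_bias \<theta>)\<^sup>2 \<le> 1" using bp that by (intro rel_bias_bound) (auto simp: blueprint_def)
    have tt: "t bi \<in> {-1..1}" "t bj \<in> {-1..1}" "t' bi \<in> {-1..1}" "t' bj \<in> {-1..1}"
      using th B unfolding threshold_def by auto
    have Ki: "\<bar>t bi - t' bi\<bar> \<le> K" "\<bar>t bj - t' bj\<bar> \<le> K" using K B by auto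
    have d: "((1 - t bi) / 2 \<le> (1 - t' bi) / 2 \<and> (1 - t bj) / 2 \<le> (1 - t' bj) / 2) \<or>
             ((1 - t' bi) / 2 \<le> (1 - t bi) / 2 \<and> (1 - t' bj) / 2 \<le> (1 - t bj) / 2)"
      using dir B by auto
    have "(1 - t bi) / 2 + (1 - t bj) / 2 - 2 * Gamma (rel_bias \<theta>) ((1 - t bi) / 2) ((1 - t bj) / 2)
       \<le> (1 - t' bi) / 2 + (1 - t' bj) / 2 - 2 * Gamma (rel_bias \<theta>) ((1 - t' bi) / 2) ((1 - t' bj) / 2)
         + \<bar>(1 - t bi) / 2 - (1 - t' bi) / 2\<bar> + \<bar>(1 - t bj) / 2 - (1 - t' bj) / 2\<bar>"
      by (rule F_step[OF r _ _ _ _ _ _ _ _ d]) (use tt in auto)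
    moreover have "\<bar>(1 - t bi) / 2 - (1 - t' bi) / 2\<bar> + \<bar>(1 - t bj) / 2 - (1 - t' bj) / 2\<bar> \<le> K"
    proof -
      have e: "\<bar>(1 - a) / 2 - (1 - b) / 2\<bar> = \<bar>a - b\<bar> / 2" for a b :: real
      proof -
        have "(1 - a) / 2 - (1 - b) / 2 = (b - a) / 2" by (simp add: field_simps)
        moreover have "\<bar>(b - a) / 2\<bar> = \<bar>b - a\<bar> / 2" by simp
        ultimately show ?thesis by (simp only: abs_minus_commute)
      qed
      show ?thesis unfolding e using Ki by (simp add: field_simps)
    qed
    ultimately show ?thesis unfolding gfun_def thet by simp
  qed
  have "measure_pmf.expectation D (gfun t) \<le> measure_pmf.expectation D (\<lambda>\<theta>. gfun t' \<theta> + K)"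
    by (intro integral_mono_AE integrable_measure_pmf_finite[OF fin])
       (auto simp: AE_measure_pmf_iff intro: pt)
  also have "\<dots> = measure_pmf.expectation D (gfun t') + K"
    by (subst Bochner_Integration.integral_add) (auto intro: integrable_measure_pmf_finite[OF fin])
  finally show ?thesis by (simp add: soundness_t_gfun)
qed



lemma biases_finite: "finite (set_pmf D) \<Longrightarrow> finite (biases D)"
  unfolding biases_def by (auto intro!: finite_UN_I split: prod.splits)

lemma adjust:
  fixes t :: "real \<Rightarrow> real"
  assumes bp: "blueprint D \<mu>" and ab: "almost_balanced \<epsilon> D \<mu> t" and e: "\<epsilon> > 0"
  shows "\<exists>t'. balanced D \<mu> t' \<and> ((\<forall>b\<in>biases D. t' b \<le> t b) \<or> (\<forall>b\<in>biases D. t b \<le> t' b)) \<and>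
     (\<forall>b\<in>biases D. \<bar>t b - t' b\<bar> \<le> real (card (biases D)) * \<epsilon>)"
proof -
  let ?B = "biases D"
  have finB: "finite ?B" using bp biases_finite unfolding blueprint_def by auto
  have mu1: "(\<Sum>b\<in>?B. \<mu> b) = 1" and mu0: "\<forall>b\<in>?B. \<mu> b \<ge> 0" using bp unfolding blueprint_def by auto
  have thr: "\<forall>b\<in>?B. t b \<in> {-1..1}" using ab unfolding almost_balanced_def threshold_def by auto
  define s where "s = (\<Sum>b\<in>?B. \<mu> b * t b)"
  have s_le: "\<bar>s\<bar> \<le> \<epsilon>" using ab unfolding almost_balanced_def s_def by auto
  define l where "l = \<bar>s\<bar> / (1 + \<bar>s\<bar>)"
  define \<sigma> where "\<sigma> = sgn s"
  define t' where "t' = (\<lambda>b. t b - l * (t b + \<sigma>))"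
  have l0: "0 \<le> l" and l1: "l < 1" and ls: "l \<le> \<bar>s\<bar>"
    unfolding l_def by (auto simp: field_simps)
  have sig: "\<sigma> \<in> {-1, 0, 1}" unfolding \<sigma>_def by (auto simp: sgn_if)
  have sum_t': "(\<Sum>b\<in>?B. \<mu> b * t' b) = (1 - l) * s - l * \<sigma>"
  proof -
    have "(\<Sum>b\<in>?B. \<mu> b * t' b) = (\<Sum>b\<in>?B. (1 - l) * (\<mu> b * t b) - (l * \<sigma>) * \<mu> b)"
      unfolding t'_def by (intro sum.cong) (auto simp: algebra_simps)
    also have "\<dots> = (1 - l) * s - l * \<sigma>"
      by (simp add: sum_subtractf sum_distrib_left[symmetric] s_def mu1)
    finally show ?thesis .
  qed
  have as: "\<bar>s\<bar> * \<sigma> = s" by (simp add: \<sigma>_def abs_mult_sgn)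
  have "1 - l = 1 / (1 + \<bar>s\<bar>)" unfolding l_def by (simp add: field_simps)
  then have "(1 - l) * s - l * \<sigma> = s / (1 + \<bar>s\<bar>) - (\<bar>s\<bar> * \<sigma>) / (1 + \<bar>s\<bar>)"
    unfolding l_def by simp
  also have "\<dots> = 0" unfolding as by simp
  finally have bal0: "(\<Sum>b\<in>?B. \<mu> b * t' b) = 0" using sum_t' by simp
  have thr': "t' b \<in> {-1..1}" if "b \<in> ?B" for b
  proof -
    have tb: "-1 \<le> t b" "t b \<le> 1" using thr that by auto
    have "t' b = (1 - l) * t b + l * (- \<sigma>)" unfolding t'_def by (simp add: algebra_simps)
    moreover have "(1 - l) * t b \<le> (1 - l) * 1" using tb l1 by (intro mult_left_mono) auto
    moreover have "(1 - l) * (-1) \<le> (1 - l) * t b" using tb l1 by (intro mult_left_mono) auto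
    moreover have "l * (- \<sigma>) \<le> l * 1" using sig l0 by (intro mult_left_mono) auto
    moreover have "l * (-1) \<le> l * (- \<sigma>)" using sig l0 by (intro mult_left_mono) auto
    ultimately show ?thesis by (simp add: algebra_simps)
  qed
  have bal: "balanced D \<mu> t'" unfolding balanced_def threshold_def using bal0 thr' by auto
  have dir: "(\<forall>b\<in>?B. t' b \<le> t b) \<or> (\<forall>b\<in>?B. t b \<le> t' b)"
  proof (cases "0 \<le> s")
    case True
    show ?thesis
    proof (cases "s = 0")
      case True
      then have "l = 0" unfolding l_def by simp
      then show ?thesis unfolding t'_def by simp
    next
      case False
    with \<open>0 \<le> s\<close> have "\<sigma> = 1" unfolding \<sigma>_def by (auto simp: sgn_if)
    then have "\<forall>b\<in>?B. 0 \<le> l * (t b + \<sigma>)" using thr l0 by (auto intro!: mult_nonneg_nonneg)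
    then show ?thesis unfolding t'_def by auto
    qed
  next
    case False
    then have "\<sigma> = -1" unfolding \<sigma>_def by (auto simp: sgn_if)
    then have "\<forall>b\<in>?B. l * (t b + \<sigma>) \<le> 0" using thr l0 by (auto intro!: mult_nonneg_nonpos)
    then show ?thesis unfolding t'_def by auto
  qed
  have diff: "\<bar>t b - t' b\<bar> = l * \<bar>t b + \<sigma>\<bar>" for b
    unfolding t'_def using l0 by (simp add: abs_mult)
  have cardpos: "card ?B \<noteq> 0"
  proof
    assume "card ?B = 0"
    then have "?B = {}" using finB by simp
    then show False using mu1 by simp
  qed
  have bound: "\<forall>b\<in>?B. \<bar>t b - t' b\<bar> \<le> real (card ?B) * \<epsilon>"
  proof (cases "card ?B = 1")
    case True
    then obtain b0 where B0: "?B = {b0}" using card_1_singletonE by blast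
    then have "\<mu> b0 = 1" using mu1 by simp
    then have st: "s = t b0" unfolding s_def B0 by simp
    have "l * \<bar>t b0 + \<sigma>\<bar> \<le> \<epsilon>"
    proof (cases "s = 0")
      case True then show ?thesis using e l_def by simp
    next
      case False
      then have "\<bar>t b0 + \<sigma>\<bar> = 1 + \<bar>s\<bar>" unfolding st \<sigma>_def by (auto simp: sgn_if)
      then have "l * \<bar>t b0 + \<sigma>\<bar> = \<bar>s\<bar>" unfolding l_def by (simp add: field_simps)
      then show ?thesis using s_le by simp
    qed
    then show ?thesis using B0 True diff by simp
  next
    case False
    then have c2: "2 \<le> real (card ?B)" using cardpos by linarith
    show ?thesis
    proof
      fix b assume b: "b \<in> ?B"
      have "\<bar>t b + \<sigma>\<bar> \<le> 2" using thr b sig by auto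
      then have "l * \<bar>t b + \<sigma>\<bar> \<le> l * 2" using l0 by (intro mult_left_mono) auto
      also have "\<dots> \<le> \<epsilon> * 2" using ls s_le by simp
      also have "\<dots> \<le> \<epsilon> * real (card ?B)" using c2 e by (intro mult_left_mono) auto
      finally show "\<bar>t b - t' b\<bar> \<le> real (card ?B) * \<epsilon>" using diff by (simp add: mult.commute)
    qed
  qed
  show ?thesis using bal dir bound by blast
qed

theorem corollary2p16:
  fixes D :: "config pmf" and \<mu> :: "real \<Rightarrow> real" and \<epsilon> :: real
  assumes "blueprint D \<mu>" and "\<epsilon> > 0"
  shows "soundness D \<mu> \<le> soundness_eps \<epsilon> D \<mu> \<and>
         soundness_eps \<epsilon> D \<mu> \<le> soundness D \<mu> + real (card (biases D)) * \<epsilon>"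
proof
  let ?Bal = "{t. balanced D \<mu> t}" and ?AB = "{t. almost_balanced \<epsilon> D \<mu> t}"
  have z: "(\<lambda>_. 0) \<in> ?Bal" by (simp add: balanced_def threshold_def)
  have sub: "?Bal \<subseteq> ?AB" using assms(2) by (auto simp: balanced_def almost_balanced_def)
  have bddAB: "bdd_above (soundness_t D ` ?AB)"
    by (rule bdd_aboveI[where M=2]) (auto simp: almost_balanced_def intro: soundness_le2[OF assms(1)])
  have bddBal: "bdd_above (soundness_t D ` ?Bal)"
    by (rule bdd_aboveI[where M=2]) (auto simp: balanced_def intro: soundness_le2[OF assms(1)])
  show "soundness D \<mu> \<le> soundness_eps \<epsilon> D \<mu>"
    unfolding soundness_def soundness_eps_def
    by (rule cSUP_subset_mono[OF _ bddAB sub]) (use z in auto)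
  show "soundness_eps \<epsilon> D \<mu> \<le> soundness D \<mu> + real (card (biases D)) * \<epsilon>"
    unfolding soundness_eps_def
  proof (rule cSUP_least)
    show "?AB \<noteq> {}" using z sub by blast
  next
    fix t assume "t \<in> ?AB"
    then have ab: "almost_balanced \<epsilon> D \<mu> t" by simp
    obtain t' where t': "balanced D \<mu> t'" "(\<forall>b\<in>biases D. t' b \<le> t b) \<or> (\<forall>b\<in>biases D. t b \<le> t' b)"
      "\<forall>b\<in>biases D. \<bar>t b - t' b\<bar> \<le> real (card (biases D)) * \<epsilon>"
      using adjust[OF assms(1) ab assms(2)] by blast
    have "soundness_t D t \<le> soundness_t D t' + real (card (biases D)) * \<epsilon>"
      by (rule soundness_cmp[OF assms(1) _ _ t'(2) t'(3)])
         (use ab t'(1) in \<open>auto simp: almost_balanced_def balanced_def\<close>)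
    also have "soundness_t D t' \<le> soundness D \<mu>"
      unfolding soundness_def by (rule cSUP_upper[OF _ bddBal]) (use t'(1) in simp)
    finally show "soundness_t D t \<le> soundness D \<mu> + real (card (biases D)) * \<epsilon>" by simp
  qed
qed

end
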